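(* Let $2\leq k<n$ and let $A$ and $B$ be self-adjoint linear operators on an $n$-dimensional complex inner product space (equivalently, Hermitian $n\times n$ matrices). Suppose that for every $s=2,\ldots,k$, $$\lambda_s(A)+\lambda_n(B)=\lambda_s(A+B).$$ Then there exist $k-1$ nonzero, pairwise orthogonal vectors $\mathbf{x}^1,\ldots,\mathbf{x}^{k-1}$ such that for every $s=2,\ldots,k$, $$A\mathbf{x}^{s-1}=\lambda_s(A)\mathbf{x}^{s-1},\quad B\mathbf{x}^{s-1}=\lambda_n(B)\mathbf{x}^{s-1},\quad (A+B)\mathbf{x}^{s-1}=\lambda_s(A+B)\mathbf{x}^{s-1}.$$
   Context: For a self-adjoint operator (Hermitian matrix) $M$ of order $n$, its eigenvalues, counted with multiplicity, are indexed in non-increasing order as $\lambda_1(M)\geq\lambda_2(M)\geq\cdots\geq\lambda_n(M)$. *)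

theory Defs
  imports "Jordan_Normal_Form.Char_Poly" "Jordan_Normal_Form.Conjugate"
begin

definition hermitian_mat :: "nat \<Rightarrow> complex mat \<Rightarrow> bool" where
  "hermitian_mat n A \<longleftrightarrow> A \<in> carrier_mat n n \<and>
     (\<forall>i<n. \<forall>j<n. A $$ (i, j) = cnj (A $$ (j, i)))"

text \<open>Eigenvalues counted with multiplicity: roots of the characteristic polynomial,
  as real numbers (real parts; they are real for Hermitian matrices), listed in
  non-increasing order.\<close>
definition eigvals_desc :: "complex mat \<Rightarrow> real list" where
  "eigvals_desc A = rev (sorted_list_of_multiset (image_mset Re (proots (char_poly A))))"

text \<open>lambda_i(A), 1-indexed: lambda_1 >= lambda_2 >= ... >= lambda_n.\<close>
definition eig :: "complex mat \<Rightarrow> nat \<Rightarrow> real" where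
  "eig A i = eigvals_desc A ! (i - 1)"

end

theory Submission
  imports Defs "Jordan_Normal_Form.Schur_Decomposition"
    "HOL-Computational_Algebra.Fundamental_Theorem_Algebra"
begin

lemma cprod_sum:
  assumes "u \<in> carrier_vec n" "w \<in> carrier_vec n"
  shows "u \<bullet>c (w::complex vec) = (\<Sum>i\<in>{0..<n}. u$i * cnj (w$i))"
  using assms by (simp add: scalar_prod_def)

lemma cprod_cnj:
  assumes "u \<in> carrier_vec n" "w \<in> carrier_vec n"
  shows "cnj (u \<bullet>c (w::complex vec)) = w \<bullet>c u"
  using assms by (simp add: cprod_sum[OF assms] cprod_sum[OF assms(2,1)] mult.commute)

lemma adjoint_cprod:
  fixes M N :: "complex mat"
  assumes M: "M \<in> carrier_mat n m" and N: "N \<in> carrier_mat m n"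
    and adj: "\<And>i j. i < n \<Longrightarrow> j < m \<Longrightarrow> N $$ (j,i) = cnj (M $$ (i,j))"
    and x: "x \<in> carrier_vec m" and y: "y \<in> carrier_vec n"
  shows "(M *\<^sub>v x) \<bullet>c y = x \<bullet>c (N *\<^sub>v y)"
proof -
  have "(M *\<^sub>v x) \<bullet>c y = (\<Sum>i\<in>{0..<n}. (\<Sum>j\<in>{0..<m}. M$$(i,j) * x$j) * cnj (y$i))"
    using M x y by (simp add: cprod_sum[of _ n] scalar_prod_def)
  also have "\<dots> = (\<Sum>i\<in>{0..<n}. \<Sum>j\<in>{0..<m}. M$$(i,j) * x$j * cnj (y$i))"
    by (simp add: sum_distrib_right)
  also have "\<dots> = (\<Sum>j\<in>{0..<m}. \<Sum>i\<in>{0..<n}. M$$(i,j) * x$j * cnj (y$i))"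
    by (rule sum.swap)
  also have "\<dots> = (\<Sum>j\<in>{0..<m}. x$j * cnj (\<Sum>i\<in>{0..<n}. N$$(j,i) * y$i))"
    by (auto simp: sum_distrib_left adj intro!: sum.cong)
  also have "\<dots> = x \<bullet>c (N *\<^sub>v y)"
    using N x y by (simp add: cprod_sum[of _ m] scalar_prod_def)
  finally show ?thesis .
qed

definition orthonormal :: "nat \<Rightarrow> complex vec list \<Rightarrow> bool" where
  "orthonormal n us \<longleftrightarrow> length us = n \<and> set us \<subseteq> carrier_vec n \<and>
     (\<forall>i<n. \<forall>j<n. us!i \<bullet>c us!j = (if i = j then 1 else 0))"

lemma unitary_of_orthonormal:
  assumes o: "orthonormal n us"
  defines "P \<equiv> mat_of_cols n us" and "Q \<equiv> mat_of_rows n (map conjugate us)"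
  shows "P \<in> carrier_mat n n" "Q \<in> carrier_mat n n" "Q * P = 1\<^sub>m n" "P * Q = 1\<^sub>m n"
    "\<And>i j. i < n \<Longrightarrow> j < n \<Longrightarrow> Q $$ (j,i) = cnj (P $$ (i,j))"
    "\<And>i j. i < n \<Longrightarrow> j < n \<Longrightarrow> P $$ (j,i) = cnj (Q $$ (i,j))"
    "\<And>i. i < n \<Longrightarrow> col P i = us ! i"
proof -
  from o have len: "length us = n" and car: "set us \<subseteq> carrier_vec n"
    and on: "\<And>i j. i<n \<Longrightarrow> j<n \<Longrightarrow> us!i \<bullet>c us!j = (if i = j then 1 else 0)"
    unfolding orthonormal_def by auto
  have usi: "\<And>i. i < n \<Longrightarrow> us ! i \<in> carrier_vec n" using car len by auto
  have dims: "\<And>i. i < n \<Longrightarrow> dim_vec (us ! i) = n" using usi by auto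
  show P: "P \<in> carrier_mat n n" unfolding P_def using len by auto
  show Q: "Q \<in> carrier_mat n n" unfolding Q_def using len by auto
  show QP: "Q * P = 1\<^sub>m n"
  proof (rule eq_matI)
    fix i j assume "i < dim_row (1\<^sub>m n :: complex mat)" "j < dim_col (1\<^sub>m n :: complex mat)"
    hence i: "i < n" and j: "j < n" by auto
    have "(Q * P) $$ (i,j) = conjugate (us!i) \<bullet> (us ! j)"
      using P Q i j len usi unfolding Q_def P_def by (simp add: mat_of_rows_row)
    also have "\<dots> = us ! j \<bullet>c us ! i"
      by (rule comm_scalar_prod[of _ n], insert usi i j, auto)
    finally show "(Q * P) $$ (i,j) = 1\<^sub>m n $$ (i,j)" using on[OF j i] i j by auto
  qed (use P Q in auto)
  show "P * Q = 1\<^sub>m n" by (rule mat_mult_left_right_inverse[OF Q P QP])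
  have cj: "\<And>i j. i < n \<Longrightarrow> j < n \<Longrightarrow> conjugate (us ! j) $ i = cnj (us ! j $ i)"
  proof -
    fix i j assume "i < n" "j < n"
    hence "i < dim_vec (us ! j)" using dims by auto
    thus "conjugate (us ! j) $ i = cnj (us ! j $ i)" by simp
  qed
  show "\<And>i j. i < n \<Longrightarrow> j < n \<Longrightarrow> Q $$ (j,i) = cnj (P $$ (i,j))"
    unfolding P_def Q_def using len usi cj by (simp add: mat_of_rows_index mat_of_cols_index)
  show "\<And>i j. i < n \<Longrightarrow> j < n \<Longrightarrow> P $$ (j,i) = cnj (Q $$ (i,j))"
    unfolding P_def Q_def using len usi cj by (simp add: mat_of_rows_index mat_of_cols_index)
  show "\<And>i. i < n \<Longrightarrow> col P i = us ! i" unfolding P_def using len usi by simp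
qed

lemma cprod_smult:
  assumes "x \<in> carrier_vec n" "y \<in> carrier_vec n"
  shows "(a \<cdot>\<^sub>v x) \<bullet>c (b \<cdot>\<^sub>v y) = a * cnj b * (x \<bullet>c (y :: complex vec))"
proof -
  have "(a \<cdot>\<^sub>v x) \<bullet>c (b \<cdot>\<^sub>v y) = (\<Sum>i\<in>{0..<n}. (a * x$i) * cnj (b * y$i))"
    using assms by (subst cprod_sum[of _ n], auto)
  also have "\<dots> = a * cnj b * (\<Sum>i\<in>{0..<n}. x$i * cnj (y$i))"
    by (simp add: sum_distrib_left mult_ac)
  finally show ?thesis using assms by (simp add: cprod_sum[of _ n])
qed

lemma cprod_smult_left:
  assumes "x \<in> carrier_vec n" "y \<in> carrier_vec n"
  shows "(a \<cdot>\<^sub>v x) \<bullet>c y = a * (x \<bullet>c (y :: complex vec))"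
  using cprod_smult[OF assms, of a 1] by simp

lemma cprod_self_real:
  assumes "x \<in> carrier_vec n" "x \<noteq> 0\<^sub>v n"
  shows "x \<bullet>c x = complex_of_real (Re (x \<bullet>c (x :: complex vec)))" "Re (x \<bullet>c x) > 0"
proof -
  have "x \<bullet>c x > 0" using conjugate_square_greater_0_vec[OF assms(1)] assms(2) by auto
  thus "x \<bullet>c x = complex_of_real (Re (x \<bullet>c (x :: complex vec)))" "Re (x \<bullet>c x) > 0"
    by (auto simp: less_complex_def complex_eq_iff)
qed

definition nrm :: "complex vec \<Rightarrow> complex vec" where
  "nrm w = complex_of_real (1 / sqrt (Re (w \<bullet>c w))) \<cdot>\<^sub>v w"

lemma nrm_props:
  assumes w: "w \<in> carrier_vec n" "w \<noteq> 0\<^sub>v n"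
  shows "nrm w \<in> carrier_vec n" "nrm w \<bullet>c nrm w = 1"
proof -
  show "nrm w \<in> carrier_vec n" unfolding nrm_def using w by auto
  define r where "r = Re (w \<bullet>c w)"
  have r: "r > 0" "w \<bullet>c w = complex_of_real r" using cprod_self_real[OF w] unfolding r_def by auto
  have "nrm w \<bullet>c nrm w = complex_of_real (1 / sqrt r) * cnj (complex_of_real (1 / sqrt r)) * complex_of_real r"
    unfolding nrm_def r_def[symmetric] cprod_smult[OF w(1) w(1)] r(2) by (simp only: Re_complex_of_real)
  also have "\<dots> = complex_of_real ((1 / sqrt r) * (1 / sqrt r) * r)"
    by (simp only: complex_cnj_complex_of_real of_real_mult)
  also have "(1 / sqrt r) * (1 / sqrt r) * r = 1" using r by (simp add: field_simps)
  finally show "nrm w \<bullet>c nrm w = 1" by simp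
qed

lemma nrm_id: "w \<bullet>c w = 1 \<Longrightarrow> nrm w = w"
  unfolding nrm_def by simp

lemma smult_vCons: "c \<cdot>\<^sub>v vCons a (x :: 'a :: ring vec) = vCons (c * a) (c \<cdot>\<^sub>v x)"
  by (rule eq_vecI, auto simp: vec_index_vCons)

lemma row_vCons:
  assumes "M \<in> carrier_mat m (Suc n)" "i < m"
  shows "row M i = vCons (M $$ (i,0)) (vec n (\<lambda>j. M $$ (i, Suc j)))"
  by (rule eq_vecI, insert assms, auto simp: vec_index_vCons)

lemma block_mult:
  fixes A' :: "complex mat"
  assumes A': "A' \<in> carrier_mat (Suc n) (Suc n)" and e: "A' $$ (0,0) = e"
    and r0: "\<And>j. j < n \<Longrightarrow> A' $$ (0, Suc j) = 0"
    and c0: "\<And>i. i < n \<Longrightarrow> A' $$ (Suc i, 0) = 0"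
    and t: "t \<in> carrier_vec n"
  shows "A' *\<^sub>v vCons a t = vCons (e * a) (mat n n (\<lambda>(i,j). A' $$ (Suc i, Suc j)) *\<^sub>v t)"
proof (rule eq_vecI)
  show "dim_vec (A' *\<^sub>v vCons a t) = dim_vec (vCons (e * a) (mat n n (\<lambda>(i,j). A' $$ (Suc i, Suc j)) *\<^sub>v t))"
    using A' by auto
  fix i assume "i < dim_vec (vCons (e * a) (mat n n (\<lambda>(i,j). A' $$ (Suc i, Suc j)) *\<^sub>v t))"
  hence i: "i < Suc n" by auto
  have "(A' *\<^sub>v vCons a t) $ i = row A' i \<bullet> vCons a t" using A' i by auto
  also have "\<dots> = A' $$ (i,0) * a + vec n (\<lambda>j. A' $$ (i, Suc j)) \<bullet> t"
    using row_vCons[OF A' i] by simp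
  finally have eq: "(A' *\<^sub>v vCons a t) $ i = A' $$ (i,0) * a + vec n (\<lambda>j. A' $$ (i, Suc j)) \<bullet> t" .
  show "(A' *\<^sub>v vCons a t) $ i = vCons (e * a) (mat n n (\<lambda>(i,j). A' $$ (Suc i, Suc j)) *\<^sub>v t) $ i"
  proof (cases i)
    case 0
    have "vec n (\<lambda>j. A' $$ (0, Suc j)) = 0\<^sub>v n" by (rule eq_vecI, auto simp: r0)
    thus ?thesis using eq 0 e t by simp
  next
    case (Suc i')
    with i have i': "i' < n" by auto
    show ?thesis using eq Suc i' c0 t by (simp add: row_mat)
  qed
qed

lemma spectral:
  assumes "hermitian_mat n A"
  shows "\<exists>vs ds. orthonormal n vs \<and> length ds = n \<and>
     (\<forall>i<n. A *\<^sub>v vs!i = complex_of_real (ds!i) \<cdot>\<^sub>v vs!i)"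
  using assms
proof (induction n arbitrary: A)
  case 0
  show ?case by (rule exI[of _ "[]"], rule exI[of _ "[]"], auto simp: orthonormal_def)
next
  case (Suc n A)
  let ?N = "Suc n"
  from Suc.prems have A: "A \<in> carrier_mat ?N ?N"
    unfolding hermitian_mat_def by blast
  from Suc.prems have herm: "\<And>i j. i < ?N \<Longrightarrow> j < ?N \<Longrightarrow> A $$ (i,j) = cnj (A $$ (j,i))"
    unfolding hermitian_mat_def by blast
  have hadj: "\<And>x y. x \<in> carrier_vec ?N \<Longrightarrow> y \<in> carrier_vec ?N \<Longrightarrow> (A *\<^sub>v x) \<bullet>c y = x \<bullet>c (A *\<^sub>v y)"
    using adjoint_cprod[OF A A herm] by blast
  have deg: "degree (char_poly A) = ?N" using degree_monic_char_poly[OF A] by auto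
  have "\<exists>e. poly (char_poly A) e = 0"
  proof (rule fundamental_theorem_of_algebra_alt, rule notI)
    assume "\<exists>a l. a \<noteq> 0 \<and> l = 0 \<and> char_poly A = pCons a l"
    then obtain a where "char_poly A = pCons a 0" by auto
    hence "degree (char_poly A) = 0" by simp
    with deg show False by simp
  qed
  then obtain e where "poly (char_poly A) e = 0" by auto
  hence "eigenvalue A e" using eigenvalue_root_char_poly[OF A] by simp
  then obtain v where "eigenvector A v e" unfolding eigenvalue_def by auto
  hence v: "v \<in> carrier_vec ?N" "v \<noteq> 0\<^sub>v ?N" and Av: "A *\<^sub>v v = e \<cdot>\<^sub>v v"
    unfolding eigenvector_def using A by auto
  define v1 where "v1 = nrm v"
  have v1: "v1 \<in> carrier_vec ?N" "v1 \<bullet>c v1 = 1" using nrm_props[OF v] unfolding v1_def by auto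
  have v10: "v1 \<noteq> 0\<^sub>v ?N" using v1 by auto
  have Av1: "A *\<^sub>v v1 = e \<cdot>\<^sub>v v1"
    unfolding v1_def nrm_def using A v Av
    by (simp add: mult_mat_vec[OF A v(1)] smult_smult_assoc mult.commute)
  interpret cof_vec_space ?N "TYPE(complex)" .
  define b where "b = basis_completion v1"
  from basis_completion[OF v1(1) v10, folded b_def]
  have dist_b: "distinct b" and indep: "\<not> lin_dep (set b)" and bcar: "set b \<subseteq> carrier_vec ?N"
    and hdb: "hd b = v1" and len_b: "length b = ?N" by auto
  from hdb len_b obtain bs where bv: "b = v1 # bs" by (cases b, auto)
  define ws where "ws = gram_schmidt ?N b"
  from gram_schmidt_result[OF bcar dist_b indep ws_def]
  have ws: "set ws \<subseteq> carrier_vec ?N" "corthogonal ws" "length ws = ?N" by (auto simp: len_b)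
  from gram_schmidt_hd[OF v1(1), of bs, folded bv] have hdws: "hd ws = v1" unfolding ws_def .
  have wsi: "\<And>i. i < ?N \<Longrightarrow> ws ! i \<in> carrier_vec ?N" using ws by auto
  have ws0: "\<And>i. i < ?N \<Longrightarrow> ws ! i \<noteq> 0\<^sub>v ?N"
  proof
    fix i assume i: "i < ?N" and z: "ws ! i = 0\<^sub>v ?N"
    have "ws ! i \<bullet>c ws ! i \<noteq> 0" using corthogonalD[OF ws(2), of i i] i ws(3) by auto
    thus False using z by simp
  qed
  define us where "us = map nrm ws"
  have us_o: "orthonormal ?N us"
    unfolding orthonormal_def
  proof (intro conjI allI impI)
    show "length us = ?N" unfolding us_def using ws by simp
    show "set us \<subseteq> carrier_vec ?N" unfolding us_def using nrm_props(1)[OF wsi ws0] ws(3)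
      by (auto simp: in_set_conv_nth)
    fix i j assume i: "i < ?N" and j: "j < ?N"
    show "us ! i \<bullet>c us ! j = (if i = j then 1 else 0)"
    proof (cases "i = j")
      case True
      thus ?thesis unfolding us_def using i ws(3) nrm_props(2)[OF wsi ws0] by simp
    next
      case False
      have "us ! i \<bullet>c us ! j = complex_of_real (1 / sqrt (Re (ws!i \<bullet>c ws!i))) *
         cnj (complex_of_real (1 / sqrt (Re (ws!j \<bullet>c ws!j)))) * (ws ! i \<bullet>c ws ! j)"
        unfolding us_def nrm_def using i j ws(3) by (simp add: cprod_smult[OF wsi[OF i] wsi[OF j]])
      also have "ws ! i \<bullet>c ws ! j = 0" using corthogonalD[OF ws(2), of i j] i j ws(3) False by auto
      finally show ?thesis using False by simp
    qed
  qed
  have us0: "us ! 0 = v1" unfolding us_def using hdws ws(3) nrm_id[OF v1(2)]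
    by (cases ws, auto)
  define W where "W = mat_of_cols ?N us"
  define W' where "W' = mat_of_rows ?N (map conjugate us)"
  note U = unitary_of_orthonormal[OF us_o, folded W_def W'_def]
  have W: "W \<in> carrier_mat ?N ?N" and W': "W' \<in> carrier_mat ?N ?N" using U by auto
  have usi: "\<And>i. i < ?N \<Longrightarrow> us ! i \<in> carrier_vec ?N" and lus: "length us = ?N"
    using us_o unfolding orthonormal_def by auto
  have uson: "\<And>i j. i < ?N \<Longrightarrow> j < ?N \<Longrightarrow> us ! i \<bullet>c us ! j = (if i = j then 1 else 0)"
    using us_o unfolding orthonormal_def by auto
  define A' where "A' = W' * A * W"
  have A': "A' \<in> carrier_mat ?N ?N" unfolding A'_def using W W' A by auto
  have A'e: "\<And>i j. i < ?N \<Longrightarrow> j < ?N \<Longrightarrow> A' $$ (i,j) = (A *\<^sub>v us ! j) \<bullet>c us ! i"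
  proof -
    fix i j assume i: "i < ?N" and j: "j < ?N"
    have "A' $$ (i,j) = (W' * (A * W)) $$ (i,j)" unfolding A'_def using W W' A by simp
    also have "\<dots> = row W' i \<bullet> col (A * W) j" using W W' A i j by simp
    also have "row W' i = conjugate (us ! i)" unfolding W'_def using i lus usi[OF i]
      by (subst mat_of_rows_row, auto)
    also have "col (A * W) j = A *\<^sub>v us ! j" using col_mult2[OF A W j] U(7)[OF j] by simp
    also have "conjugate (us ! i) \<bullet> (A *\<^sub>v us ! j) = (A *\<^sub>v us ! j) \<bullet>c us ! i"
      by (rule comm_scalar_prod[of _ ?N], insert A usi[OF i] usi[OF j], auto)
    finally show "A' $$ (i,j) = (A *\<^sub>v us ! j) \<bullet>c us ! i" .
  qed
  have A'h: "\<And>i j. i < ?N \<Longrightarrow> j < ?N \<Longrightarrow> A' $$ (i,j) = cnj (A' $$ (j,i))"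
  proof -
    fix i j assume i: "i < ?N" and j: "j < ?N"
    have "cnj (A' $$ (j,i)) = cnj (us ! i \<bullet>c (A *\<^sub>v us ! j))"
      using A'e[OF j i] hadj[OF usi[OF i] usi[OF j]] by simp
    also have "\<dots> = (A *\<^sub>v us ! j) \<bullet>c us ! i"
      by (rule cprod_cnj, insert usi[OF i] usi[OF j] A, auto)
    finally show "A' $$ (i,j) = cnj (A' $$ (j,i))" using A'e[OF i j] by simp
  qed
  have A'c0: "\<And>i. i < ?N \<Longrightarrow> A' $$ (i,0) = (if i = 0 then e else 0)"
  proof -
    fix i assume i: "i < ?N"
    have "A' $$ (i,0) = (e \<cdot>\<^sub>v v1) \<bullet>c us ! i" using A'e[OF i] us0 Av1 by simp
    also have "\<dots> = e * (v1 \<bullet>c us ! i)" by (rule cprod_smult_left[OF v1(1) usi[OF i]])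
    also have "v1 \<bullet>c us ! i = (if i = 0 then 1 else 0)" using uson[of 0 i] us0 i by simp
    finally show "A' $$ (i,0) = (if i = 0 then e else 0)" by simp
  qed
  have "A' $$ (0,0) = cnj (A' $$ (0,0))" by (rule A'h, auto)
  hence ereal: "cnj e = e" using A'c0[of 0] by simp
  hence ee: "e = complex_of_real (Re e)" by (simp add: complex_eq_iff)
  have A'r0: "\<And>j. j < n \<Longrightarrow> A' $$ (0, Suc j) = 0"
  proof -
    fix j assume j: "j < n"
    have "A' $$ (0, Suc j) = cnj (A' $$ (Suc j, 0))" by (rule A'h, insert j, auto)
    thus "A' $$ (0, Suc j) = 0" using A'c0[of "Suc j"] j by simp
  qed
  have A'c0': "\<And>i. i < n \<Longrightarrow> A' $$ (Suc i, 0) = 0" using A'c0 by simp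
  define A3 where "A3 = mat n n (\<lambda>(i,j). A' $$ (Suc i, Suc j))"
  have "hermitian_mat n A3" unfolding hermitian_mat_def A3_def
  proof (intro conjI allI impI)
    fix i j assume "i < n" "j < n"
    thus "mat n n (\<lambda>(i,j). A' $$ (Suc i, Suc j)) $$ (i, j) = cnj (mat n n (\<lambda>(i,j). A' $$ (Suc i, Suc j)) $$ (j, i))"
      using A'h[of "Suc i" "Suc j"] by simp
  qed auto
  from Suc.IH[OF this] obtain ts ds3 where ts: "orthonormal n ts" and lds3: "length ds3 = n"
    and tev: "\<And>i. i < n \<Longrightarrow> A3 *\<^sub>v ts ! i = complex_of_real (ds3 ! i) \<cdot>\<^sub>v ts ! i" by auto
  have tsi: "\<And>i. i < n \<Longrightarrow> ts ! i \<in> carrier_vec n" and lts: "length ts = n"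
    and tson: "\<And>i j. i < n \<Longrightarrow> j < n \<Longrightarrow> ts ! i \<bullet>c ts ! j = (if i = j then 1 else 0)"
    using ts unfolding orthonormal_def by auto
  have blk: "\<And>a t. t \<in> carrier_vec n \<Longrightarrow> A' *\<^sub>v vCons a t = vCons (e * a) (A3 *\<^sub>v t)"
    unfolding A3_def by (rule block_mult[OF A' _ A'r0 A'c0'], insert A'c0[of 0], auto)
  define zs where "zs = vCons 1 (0\<^sub>v n) # map (vCons 0) ts"
  define ds where "ds = Re e # ds3"
  have lzs: "length zs = ?N" unfolding zs_def using lts by simp
  have zsi: "\<And>i. i < ?N \<Longrightarrow> zs ! i \<in> carrier_vec ?N"
    unfolding zs_def using tsi lts by (auto simp: nth_Cons split: nat.splits)
  have zson: "\<And>i j. i < ?N \<Longrightarrow> j < ?N \<Longrightarrow> zs ! i \<bullet>c zs ! j = (if i = j then 1 else 0)"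
  proof -
    fix i j assume i: "i < ?N" and j: "j < ?N"
    show "zs ! i \<bullet>c zs ! j = (if i = j then 1 else 0)"
    proof (cases i; cases j)
      fix i' j' assume ii: "i = Suc i'" and jj: "j = Suc j'"
      thus ?thesis unfolding zs_def using i j lts tson[of i' j'] tsi[of i'] tsi[of j']
        by simp
    next
      fix j' assume ii: "i = 0" and jj: "j = Suc j'"
      have t: "ts ! j' \<in> carrier_vec n" using tsi[of j'] j jj by simp
      have "0\<^sub>v n \<bullet>c ts ! j' = 0" using t by simp
      thus ?thesis unfolding zs_def using ii jj j lts by simp
    next
      fix i' assume ii: "i = Suc i'" and jj: "j = 0"
      have t: "ts ! i' \<in> carrier_vec n" using tsi[of i'] i ii by simp
      have "ts ! i' \<bullet>c 0\<^sub>v n = 0" using t by simp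
      thus ?thesis unfolding zs_def using ii jj i lts by simp
    qed (simp add: zs_def)
  qed
  have zsev: "\<And>i. i < ?N \<Longrightarrow> A' *\<^sub>v zs ! i = complex_of_real (ds ! i) \<cdot>\<^sub>v zs ! i"
  proof -
    fix i assume i: "i < ?N"
    show "A' *\<^sub>v zs ! i = complex_of_real (ds ! i) \<cdot>\<^sub>v zs ! i"
    proof (cases i)
      case 0
      have "A3 *\<^sub>v 0\<^sub>v n = 0\<^sub>v n" unfolding A3_def by (rule eq_vecI, auto)
      moreover have "\<And>c. c \<cdot>\<^sub>v 0\<^sub>v n = (0\<^sub>v n :: complex vec)" by (rule eq_vecI, auto)
      ultimately show ?thesis using 0 blk[of "0\<^sub>v n" 1] ee unfolding zs_def ds_def by (simp add: smult_vCons)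
    next
      case (Suc i')
      with i have i': "i' < n" by auto
      show ?thesis using Suc blk[OF tsi[OF i'], of 0] tev[OF i'] lts i'
        unfolding zs_def ds_def by (simp add: smult_vCons)
    qed
  qed
  define vs where "vs = map (\<lambda>z. W *\<^sub>v z) zs"
  have WA': "A * W = W * A'"
  proof -
    have "W * A' = W * (W' * (A * W))" unfolding A'_def using W W' A by simp
    also have "\<dots> = (W * W') * (A * W)" using W W' A by (intro assoc_mult_mat[symmetric], auto)
    also have "\<dots> = A * W" using U(4) A W by simp
    finally show ?thesis by simp
  qed
  show ?case
  proof (intro exI conjI allI impI)
    show "orthonormal ?N vs" unfolding orthonormal_def
    proof (intro conjI allI impI)
      show "length vs = ?N" unfolding vs_def using lzs by simp
      show "set vs \<subseteq> carrier_vec ?N" unfolding vs_def using zsi lzs W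
        by (auto simp: in_set_conv_nth)
      fix i j assume i: "i < ?N" and j: "j < ?N"
      have "vs ! i \<bullet>c vs ! j = (W *\<^sub>v zs ! i) \<bullet>c (W *\<^sub>v zs ! j)" unfolding vs_def using i j lzs by simp
      also have "\<dots> = zs ! i \<bullet>c (W' *\<^sub>v (W *\<^sub>v zs ! j))"
        by (rule adjoint_cprod[OF W W' U(5)], insert zsi i j W, auto)
      also have "W' *\<^sub>v (W *\<^sub>v zs ! j) = zs ! j"
        using U(3) W W' zsi[OF j] assoc_mult_mat_vec[OF W' W zsi[OF j]] by simp
      finally show "vs ! i \<bullet>c vs ! j = (if i = j then 1 else 0)" using zson[OF i j] by simp
    qed
    show "length ds = ?N" unfolding ds_def using lds3 by simp
    fix i assume i: "i < ?N"
    have "A *\<^sub>v vs ! i = A *\<^sub>v (W *\<^sub>v zs ! i)" unfolding vs_def using i lzs by simp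
    also have "\<dots> = (A * W) *\<^sub>v zs ! i" using A W zsi[OF i] by simp
    also have "\<dots> = W *\<^sub>v (A' *\<^sub>v zs ! i)" unfolding WA' using W A' zsi[OF i] by simp
    also have "\<dots> = complex_of_real (ds ! i) \<cdot>\<^sub>v (W *\<^sub>v zs ! i)"
      unfolding zsev[OF i] by (rule mult_mat_vec[OF W zsi[OF i]])
    also have "W *\<^sub>v zs ! i = vs ! i" unfolding vs_def using i lzs by simp
    finally show "A *\<^sub>v vs ! i = complex_of_real (ds ! i) \<cdot>\<^sub>v vs ! i" .
  qed
qed

definition dmat :: "nat \<Rightarrow> (nat \<Rightarrow> real) \<Rightarrow> complex mat" where
  "dmat n d = mat n n (\<lambda>(i,j). if i = j then complex_of_real (d i) else 0)"

definition sdata :: "nat \<Rightarrow> complex mat \<Rightarrow> complex mat \<Rightarrow> complex mat \<Rightarrow> (nat \<Rightarrow> real) \<Rightarrow> bool" where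
  "sdata n M P Q d \<longleftrightarrow> M \<in> carrier_mat n n \<and> P \<in> carrier_mat n n \<and> Q \<in> carrier_mat n n \<and>
     Q * P = 1\<^sub>m n \<and> P * Q = 1\<^sub>m n \<and>
     (\<forall>i<n. \<forall>j<n. Q $$ (j,i) = cnj (P $$ (i,j))) \<and>
     (\<forall>i<n. \<forall>j<n. P $$ (j,i) = cnj (Q $$ (i,j))) \<and>
     M * P = P * dmat n d"

lemma proots_linprod: "proots (\<Prod>a\<leftarrow>xs. [:- a, 1:]) = mset (xs :: complex list)"
proof (induction xs)
  case (Cons a xs)
  have nz: "(\<Prod>a\<leftarrow>xs. [:- a, 1:]) \<noteq> 0" by (auto simp: prod_list_zero_iff)
  have "proots (\<Prod>a\<leftarrow>a # xs. [:- a, 1:]) = proots [:- a, 1:] + proots (\<Prod>a\<leftarrow>xs. [:- a, 1:])"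
    using proots_mult[of "[:- a, 1:]" "\<Prod>a\<leftarrow>xs. [:- a, 1:]"] nz by simp
  thus ?case using Cons by simp
qed simp

lemma spectral_data:
  assumes h: "hermitian_mat n M"
  shows "\<exists>P Q d. sdata n M P Q d \<and>
     image_mset Re (proots (char_poly M)) = mset (map d [0..<n])"
proof -
  from spectral[OF h] obtain vs ds where o: "orthonormal n vs" and lds: "length ds = n"
    and ev: "\<And>i. i < n \<Longrightarrow> M *\<^sub>v vs!i = complex_of_real (ds!i) \<cdot>\<^sub>v vs!i" by auto
  define P where "P = mat_of_cols n vs"
  define Q where "Q = mat_of_rows n (map conjugate vs)"
  define d where "d = (\<lambda>i. ds ! i)"
  note U = unitary_of_orthonormal[OF o, folded P_def Q_def]
  have M: "M \<in> carrier_mat n n" using h unfolding hermitian_mat_def by blast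
  have P: "P \<in> carrier_mat n n" and Q: "Q \<in> carrier_mat n n" using U by auto
  have D: "dmat n d \<in> carrier_mat n n" unfolding dmat_def by simp
  have vsi: "\<And>i. i < n \<Longrightarrow> vs ! i \<in> carrier_vec n" using o unfolding orthonormal_def by auto
  have MP: "M * P = P * dmat n d"
  proof (rule eq_matI)
    fix i j assume "i < dim_row (P * dmat n d)" "j < dim_col (P * dmat n d)"
    hence i: "i < n" and j: "j < n" using P D by auto
    have "(M * P) $$ (i,j) = col (M * P) j $ i" using M P i j by simp
    also have "col (M * P) j = M *\<^sub>v vs ! j" using col_mult2[OF M P j] U(7)[OF j] by simp
    also have "(M *\<^sub>v vs ! j) $ i = complex_of_real (d j) * P $$ (i,j)"
      using ev[OF j] i j vsi[OF j] U(7)[OF j] P unfolding d_def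
      by (metis P_def index_smult_vec(1) carrier_vecD mat_of_cols_index o orthonormal_def)
    also have "\<dots> = (P * dmat n d) $$ (i,j)"
    proof -
      have "col (dmat n d) j = complex_of_real (d j) \<cdot>\<^sub>v unit_vec n j"
        by (rule eq_vecI, insert j, auto simp: dmat_def)
      hence "(P * dmat n d) $$ (i,j) = row P i \<bullet> (complex_of_real (d j) \<cdot>\<^sub>v unit_vec n j)"
        using P D i j by simp
      also have "\<dots> = complex_of_real (d j) * (row P i \<bullet> unit_vec n j)"
        by (rule scalar_prod_smult_distrib[of _ n], insert P i, auto)
      also have "row P i \<bullet> unit_vec n j = P $$ (i,j)" using j P i by simp
      finally show ?thesis by simp
    qed
    finally show "(M * P) $$ (i,j) = (P * dmat n d) $$ (i,j)" .
  qed (use M P D in auto)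
  have sd: "sdata n M P Q d" unfolding sdata_def using M P Q U(3,4,5,6) MP by auto
  have "similar_mat_wit M (dmat n d) P Q"
    unfolding similar_mat_wit_def Let_def
  proof (intro conjI)
    show "{M, dmat n d, P, Q} \<subseteq> carrier_mat (dim_row M) (dim_row M)" using M P Q D by auto
    show "P * Q = 1\<^sub>m (dim_row M)" "Q * P = 1\<^sub>m (dim_row M)" using U M by auto
    have "P * dmat n d * Q = M * P * Q" using MP by simp
    also have "\<dots> = M * (P * Q)" using M P Q by simp
    also have "\<dots> = M" using U(4) M by simp
    finally show "M = P * dmat n d * Q" by simp
  qed
  hence "similar_mat M (dmat n d)" unfolding similar_mat_def by blast
  hence "char_poly M = char_poly (dmat n d)" by (rule char_poly_similar)
  also have "\<dots> = (\<Prod>a\<leftarrow>diag_mat (dmat n d). [:- a, 1:])"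
    by (rule char_poly_upper_triangular[OF D], auto simp: upper_triangular_def dmat_def)
  also have "diag_mat (dmat n d) = map (\<lambda>i. complex_of_real (d i)) [0..<n]"
    unfolding diag_mat_def dmat_def by auto
  finally have cp: "char_poly M = (\<Prod>a\<leftarrow>map (\<lambda>i. complex_of_real (d i)) [0..<n]. [:- a, 1:])" .
  have "proots (char_poly M) = mset (map (\<lambda>i. complex_of_real (d i)) [0..<n])"
    unfolding cp by (rule proots_linprod)
  hence "image_mset Re (proots (char_poly M)) = mset (map d [0..<n])"
    by (simp add: multiset.map_comp o_def)
  with sd show ?thesis by blast
qed

lemma rayleigh:
  assumes sd: "sdata n M P Q d" and y: "y \<in> carrier_vec n"
  shows "Re ((M *\<^sub>v y) \<bullet>c y) = (\<Sum>i\<in>{0..<n}. d i * (cmod ((Q *\<^sub>v y) $ i))^2)"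
    "Re (y \<bullet>c y) = (\<Sum>i\<in>{0..<n}. (cmod ((Q *\<^sub>v y) $ i))^2)"
    "(\<forall>i<n. d i = t \<or> (Q *\<^sub>v y) $ i = 0) \<Longrightarrow> M *\<^sub>v y = complex_of_real t \<cdot>\<^sub>v y"
proof -
  from sd have M: "M \<in> carrier_mat n n" and P: "P \<in> carrier_mat n n" and Q: "Q \<in> carrier_mat n n"
    and QP: "Q * P = 1\<^sub>m n" and PQ: "P * Q = 1\<^sub>m n"
    and MP: "M * P = P * dmat n d" unfolding sdata_def by blast+
  from sd have adj: "\<And>i j. i < n \<Longrightarrow> j < n \<Longrightarrow> Q $$ (j,i) = cnj (P $$ (i,j))"
    unfolding sdata_def by blast
  define z where "z = Q *\<^sub>v y"
  have z: "z \<in> carrier_vec n" unfolding z_def using Q y by simp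
  have D: "dmat n d \<in> carrier_mat n n" unfolding dmat_def by simp
  have yz: "y = P *\<^sub>v z" unfolding z_def using assoc_mult_mat_vec[OF P Q y] PQ y by simp
  have rowD: "\<And>i. i < n \<Longrightarrow> row (dmat n d) i = complex_of_real (d i) \<cdot>\<^sub>v unit_vec n i"
    by (rule eq_vecI, auto simp: dmat_def)
  have Dz: "dmat n d *\<^sub>v z = vec n (\<lambda>i. complex_of_real (d i) * z $ i)"
  proof (rule eq_vecI)
    fix i assume "i < dim_vec (vec n (\<lambda>i. complex_of_real (d i) * z $ i))"
    hence i: "i < n" by simp
    have "(dmat n d *\<^sub>v z) $ i = (complex_of_real (d i) \<cdot>\<^sub>v unit_vec n i) \<bullet> z"
      using D i rowD[OF i] by simp
    also have "\<dots> = complex_of_real (d i) * (unit_vec n i \<bullet> z)"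
      by (rule smult_scalar_prod_distrib[of _ n], insert z, auto)
    also have "unit_vec n i \<bullet> z = z $ i" using i z by simp
    finally show "(dmat n d *\<^sub>v z) $ i = vec n (\<lambda>i. complex_of_real (d i) * z $ i) $ i" using i by simp
  qed (use D in simp)
  have My: "M *\<^sub>v y = P *\<^sub>v (dmat n d *\<^sub>v z)"
    unfolding yz using assoc_mult_mat_vec[OF M P z] MP assoc_mult_mat_vec[OF P D z] by simp
  have uni: "\<And>u w. u \<in> carrier_vec n \<Longrightarrow> w \<in> carrier_vec n \<Longrightarrow> (P *\<^sub>v u) \<bullet>c (P *\<^sub>v w) = u \<bullet>c w"
  proof -
    fix u w :: "complex vec" assume u: "u \<in> carrier_vec n" and w: "w \<in> carrier_vec n"
    have "(P *\<^sub>v u) \<bullet>c (P *\<^sub>v w) = u \<bullet>c (Q *\<^sub>v (P *\<^sub>v w))"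
      by (rule adjoint_cprod[OF P Q adj u], insert P w, auto)
    also have "Q *\<^sub>v (P *\<^sub>v w) = w" using assoc_mult_mat_vec[OF Q P w] QP w by simp
    finally show "(P *\<^sub>v u) \<bullet>c (P *\<^sub>v w) = u \<bullet>c w" .
  qed
  have sq: "\<And>c::complex. Re (c * cnj c) = (cmod c)^2"
  proof -
    fix c :: complex
    have "Re (c * cnj c) = Re (complex_of_real ((cmod c)^2))" by (simp only: complex_norm_square)
    thus "Re (c * cnj c) = (cmod c)^2" by simp
  qed
  have "(M *\<^sub>v y) \<bullet>c y = (dmat n d *\<^sub>v z) \<bullet>c z" unfolding My using uni[OF _ z, of "dmat n d *\<^sub>v z"] D z
    by (simp add: yz[symmetric])
  also have "\<dots> = (\<Sum>i\<in>{0..<n}. complex_of_real (d i) * z $ i * cnj (z $ i))"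
    unfolding Dz using z by (simp add: cprod_sum[of _ n])
  finally have "Re ((M *\<^sub>v y) \<bullet>c y) = (\<Sum>i\<in>{0..<n}. d i * Re (z $ i * cnj (z $ i)))"
    by (simp add: mult.assoc)
  thus "Re ((M *\<^sub>v y) \<bullet>c y) = (\<Sum>i\<in>{0..<n}. d i * (cmod ((Q *\<^sub>v y) $ i))^2)"
    unfolding z_def[symmetric] sq .
  have "y \<bullet>c y = z \<bullet>c z" using uni[OF z z] yz by simp
  also have "\<dots> = (\<Sum>i\<in>{0..<n}. z $ i * cnj (z $ i))" using z by (simp add: cprod_sum[of _ n])
  finally have "Re (y \<bullet>c y) = (\<Sum>i\<in>{0..<n}. Re (z $ i * cnj (z $ i)))" by simp
  thus "Re (y \<bullet>c y) = (\<Sum>i\<in>{0..<n}. (cmod ((Q *\<^sub>v y) $ i))^2)"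
    unfolding z_def[symmetric] sq .
  assume a: "\<forall>i<n. d i = t \<or> (Q *\<^sub>v y) $ i = 0"
  have a': "\<And>i. i < n \<Longrightarrow> d i = t \<or> z $ i = 0" using a unfolding z_def by blast
  have "dmat n d *\<^sub>v z = complex_of_real t \<cdot>\<^sub>v z"
  proof (rule eq_vecI)
    fix i assume "i < dim_vec (complex_of_real t \<cdot>\<^sub>v z)"
    hence i: "i < n" using z by simp
    show "(dmat n d *\<^sub>v z) $ i = (complex_of_real t \<cdot>\<^sub>v z) $ i"
      unfolding Dz using a'[OF i] i z by auto
  qed (use z D in simp)
  hence "M *\<^sub>v y = P *\<^sub>v (complex_of_real t \<cdot>\<^sub>v z)" using My by simp
  also have "\<dots> = complex_of_real t \<cdot>\<^sub>v y" unfolding yz by (rule mult_mat_vec[OF P z])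
  finally show "M *\<^sub>v y = complex_of_real t \<cdot>\<^sub>v y" .
qed

lemma rayleigh_ge:
  assumes sd: "sdata n M P Q d" and y: "y \<in> carrier_vec n"
    and t: "\<forall>i<n. (Q *\<^sub>v y) $ i \<noteq> 0 \<longrightarrow> t \<le> d i"
  shows "t * Re (y \<bullet>c y) \<le> Re ((M *\<^sub>v y) \<bullet>c y)"
    "t * Re (y \<bullet>c y) = Re ((M *\<^sub>v y) \<bullet>c y) \<Longrightarrow> M *\<^sub>v y = complex_of_real t \<cdot>\<^sub>v y"
proof -
  let ?z = "Q *\<^sub>v y"
  have eq: "Re ((M *\<^sub>v y) \<bullet>c y) - t * Re (y \<bullet>c y) = (\<Sum>i\<in>{0..<n}. (d i - t) * (cmod (?z $ i))^2)"
    unfolding rayleigh(1,2)[OF sd y] by (simp add: sum_subtractf sum_distrib_left left_diff_distrib)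
  have nn: "\<And>i. i \<in> {0..<n} \<Longrightarrow> (d i - t) * (cmod (?z $ i))^2 \<ge> 0"
  proof -
    fix i assume i: "i \<in> {0..<n}"
    show "(d i - t) * (cmod (?z $ i))^2 \<ge> 0"
    proof (cases "?z $ i = 0")
      case False
      hence "t \<le> d i" using t i by simp
      thus ?thesis by simp
    qed simp
  qed
  have "(\<Sum>i\<in>{0..<n}. (d i - t) * (cmod (?z $ i))^2) \<ge> 0" by (rule sum_nonneg, rule nn)
  thus "t * Re (y \<bullet>c y) \<le> Re ((M *\<^sub>v y) \<bullet>c y)" using eq by simp
  assume "t * Re (y \<bullet>c y) = Re ((M *\<^sub>v y) \<bullet>c y)"
  hence "(\<Sum>i\<in>{0..<n}. (d i - t) * (cmod (?z $ i))^2) = 0" using eq by simp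
  hence "\<forall>i\<in>{0..<n}. (d i - t) * (cmod (?z $ i))^2 = 0"
    using sum_nonneg_eq_0_iff[of "{0..<n}" "\<lambda>i. (d i - t) * (cmod (?z $ i))^2"] nn by blast
  hence "\<forall>i<n. d i = t \<or> ?z $ i = 0" by auto
  thus "M *\<^sub>v y = complex_of_real t \<cdot>\<^sub>v y" by (rule rayleigh(3)[OF sd y])
qed

lemma rayleigh_le:
  assumes sd: "sdata n M P Q d" and y: "y \<in> carrier_vec n"
    and t: "\<forall>i<n. (Q *\<^sub>v y) $ i \<noteq> 0 \<longrightarrow> d i \<le> t"
  shows "Re ((M *\<^sub>v y) \<bullet>c y) \<le> t * Re (y \<bullet>c y)"
    "t * Re (y \<bullet>c y) = Re ((M *\<^sub>v y) \<bullet>c y) \<Longrightarrow> M *\<^sub>v y = complex_of_real t \<cdot>\<^sub>v y"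
proof -
  let ?z = "Q *\<^sub>v y"
  have eq: "t * Re (y \<bullet>c y) - Re ((M *\<^sub>v y) \<bullet>c y) = (\<Sum>i\<in>{0..<n}. (t - d i) * (cmod (?z $ i))^2)"
    unfolding rayleigh(1,2)[OF sd y] by (simp add: sum_subtractf sum_distrib_left left_diff_distrib)
  have nn: "\<And>i. i \<in> {0..<n} \<Longrightarrow> (t - d i) * (cmod (?z $ i))^2 \<ge> 0"
  proof -
    fix i assume i: "i \<in> {0..<n}"
    show "(t - d i) * (cmod (?z $ i))^2 \<ge> 0"
    proof (cases "?z $ i = 0")
      case False
      hence "d i \<le> t" using t i by simp
      thus ?thesis by simp
    qed simp
  qed
  have "(\<Sum>i\<in>{0..<n}. (t - d i) * (cmod (?z $ i))^2) \<ge> 0" by (rule sum_nonneg, rule nn)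
  thus "Re ((M *\<^sub>v y) \<bullet>c y) \<le> t * Re (y \<bullet>c y)" using eq by simp
  assume "t * Re (y \<bullet>c y) = Re ((M *\<^sub>v y) \<bullet>c y)"
  hence "(\<Sum>i\<in>{0..<n}. (t - d i) * (cmod (?z $ i))^2) = 0" using eq by simp
  hence "\<forall>i\<in>{0..<n}. (t - d i) * (cmod (?z $ i))^2 = 0"
    using sum_nonneg_eq_0_iff[of "{0..<n}" "\<lambda>i. (t - d i) * (cmod (?z $ i))^2"] nn by blast
  hence "\<forall>i<n. d i = t \<or> ?z $ i = 0" by auto
  thus "M *\<^sub>v y = complex_of_real t \<cdot>\<^sub>v y" by (rule rayleigh(3)[OF sd y])
qed

lemma kernel_exists:
  fixes rs :: "complex vec list"
  assumes rs: "set rs \<subseteq> carrier_vec n" and len: "length rs < n"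
  shows "\<exists>z. z \<in> carrier_vec n \<and> z \<noteq> 0\<^sub>v n \<and> (\<forall>r\<in>set rs. r \<bullet> z = 0)"
proof -
  define c where "c = (\<lambda>i. if i < length rs then rs ! i else 0\<^sub>v n)"
  define G where "G = mat\<^sub>r n n (\<lambda>i. if i = n - 1 then 0\<^sub>v n else c i)"
  have c: "c \<in> {0..<n} \<rightarrow> carrier_vec n" unfolding c_def using rs nth_mem by fastforce
  have G: "G \<in> carrier_mat n n" unfolding G_def by simp
  have "det G = 0" unfolding G_def by (rule det_row_0[OF _ c], insert len, auto)
  then obtain z where z: "z \<in> carrier_vec n" "z \<noteq> 0\<^sub>v n" "G *\<^sub>v z = 0\<^sub>v n"
    using det_0_iff_vec_prod_zero[OF G] by auto
  have "\<forall>r\<in>set rs. r \<bullet> z = 0"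
  proof
    fix r assume "r \<in> set rs"
    then obtain i where i: "i < length rs" and r: "r = rs ! i" by (auto simp: in_set_conv_nth)
    have ri: "rs ! i \<in> carrier_vec n" using rs i by auto
    have "row G i = rs ! i" unfolding G_def using i len ri c_def by (subst row_mat_of_row_fun, auto)
    hence "(G *\<^sub>v z) $ i = rs ! i \<bullet> z" using G i len by simp
    thus "r \<bullet> z = 0" using z(3) i len r by simp
  qed
  with z show ?thesis by blast
qed

lemma length_filter_mset:
  assumes "mset xs = mset ys"
  shows "length (filter P xs) = length (filter P ys)"
proof -
  have "length (filter P xs) = size (filter_mset P (mset xs))" by (metis mset_filter size_mset)
  also have "\<dots> = size (filter_mset P (mset ys))" using assms by simp
  also have "\<dots> = length (filter P ys)" by (metis mset_filter size_mset)
  finally show ?thesis .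
qed

lemma count_bound:
  fixes evA evC :: "real list"
  assumes lA: "length evA = n" and lC: "length evC = n"
    and sA: "sorted (rev evA)" and sC: "sorted (rev evC)" and p: "p < n"
  shows "length (filter (\<lambda>x. evA ! p < x) evA) + card {l\<in>{1..<p}. evA ! l = evA ! p}
     + length (filter (\<lambda>x. x < evC ! p) evC) < n"
proof -
  define S1 where "S1 = {j. j < n \<and> evA ! p < evA ! j}"
  define S2 where "S2 = {l\<in>{1..<p}. evA ! l = evA ! p}"
  define S3 where "S3 = {j. j < n \<and> evC ! j < evC ! p}"
  have c1: "length (filter (\<lambda>x. evA ! p < x) evA) = card S1"
    unfolding S1_def length_filter_conv_card lA ..
  have c3: "length (filter (\<lambda>x. x < evC ! p) evC) = card S3"
    unfolding S3_def length_filter_conv_card lC ..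
  have S1s: "S1 \<subseteq> {0..<p}"
  proof
    fix j assume "j \<in> S1"
    hence j: "j < n" "evA ! p < evA ! j" unfolding S1_def by auto
    { assume "p \<le> j"
      hence "evA ! j \<le> evA ! p" using sorted_rev_nth_mono[OF sA, of p j] j lA by simp
      with j have False by simp }
    thus "j \<in> {0..<p}" by force
  qed
  have S2s: "S2 \<subseteq> {0..<p}" unfolding S2_def by auto
  have dis: "S1 \<inter> S2 = {}" unfolding S1_def S2_def by auto
  have "card S1 + card S2 = card (S1 \<union> S2)"
    using card_Un_disjoint[of S1 S2] dis finite_subset[OF S1s] finite_subset[OF S2s] by auto
  also have "\<dots> \<le> card {0..<p}" by (rule card_mono, insert S1s S2s, auto)
  finally have c12: "card S1 + card S2 \<le> p" by simp
  have S3s: "S3 \<subseteq> {Suc p..<n}"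
  proof
    fix j assume "j \<in> S3"
    hence j: "j < n" "evC ! j < evC ! p" unfolding S3_def by auto
    { assume "j \<le> p"
      hence "evC ! p \<le> evC ! j" using sorted_rev_nth_mono[OF sC, of j p] p lC by simp
      with j have False by simp }
    thus "j \<in> {Suc p..<n}" using j by force
  qed
  have "card S3 \<le> card {Suc p..<n}" by (rule card_mono[OF _ S3s], auto)
  hence c3': "card S3 \<le> n - Suc p" by simp
  show ?thesis unfolding c1 c3 S2_def[symmetric] using c12 c3' p by linarith
qed

lemma eig_facts:
  assumes "image_mset Re (proots (char_poly M)) = mset (map d [0..<n])"
  shows "length (eigvals_desc M) = n" "mset (eigvals_desc M) = mset (map d [0..<n])"
    "sorted (rev (eigvals_desc M))" "\<And>s. eig M s = eigvals_desc M ! (s - 1)"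
proof -
  have e: "eigvals_desc M = rev (sorted_list_of_multiset (mset (map d [0..<n])))"
    unfolding eigvals_desc_def assms ..
  show "mset (eigvals_desc M) = mset (map d [0..<n])" unfolding e by simp
  hence "size (mset (eigvals_desc M)) = n" by simp
  thus "length (eigvals_desc M) = n" by simp
  show "sorted (rev (eigvals_desc M))" unfolding e by simp
  show "\<And>s. eig M s = eigvals_desc M ! (s - 1)" unfolding eig_def ..
qed

lemma map_image_mem: "l \<in> set xs \<Longrightarrow> f l \<in> set (map f xs)" by simp

lemma herm_add:
  assumes "hermitian_mat n A" "hermitian_mat n B"
  shows "hermitian_mat n (A + B)"
proof -
  have A: "A \<in> carrier_mat n n" and B: "B \<in> carrier_mat n n"
    using assms unfolding hermitian_mat_def by blast+
  have hA: "\<And>i j. i < n \<Longrightarrow> j < n \<Longrightarrow> A $$ (i,j) = cnj (A $$ (j,i))"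
    using assms(1) unfolding hermitian_mat_def by blast
  have hB: "\<And>i j. i < n \<Longrightarrow> j < n \<Longrightarrow> B $$ (i,j) = cnj (B $$ (j,i))"
    using assms(2) unfolding hermitian_mat_def by blast
  show ?thesis unfolding hermitian_mat_def
  proof (intro conjI allI impI)
    show "A + B \<in> carrier_mat n n" using A B by simp
    fix i j assume i: "i < n" and j: "j < n"
    have "(A + B) $$ (i,j) = A $$ (i,j) + B $$ (i,j)" using A B i j by simp
    also have "\<dots> = cnj (A $$ (j,i)) + cnj (B $$ (j,i))" using hA[OF i j] hB[OF i j] by simp
    also have "\<dots> = cnj ((A + B) $$ (j,i))" using A B i j by simp
    finally show "(A + B) $$ (i,j) = cnj ((A + B) $$ (j,i))" .
  qed
qed

lemma herm_adj:
  assumes h: "hermitian_mat n A" and x: "x \<in> carrier_vec n" and y: "y \<in> carrier_vec n"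
  shows "(A *\<^sub>v x) \<bullet>c y = x \<bullet>c (A *\<^sub>v y)"
proof -
  have A: "A \<in> carrier_mat n n" using h unfolding hermitian_mat_def by blast
  have hA: "\<And>i j. i < n \<Longrightarrow> j < n \<Longrightarrow> A $$ (i,j) = cnj (A $$ (j,i))"
    using h unfolding hermitian_mat_def by blast
  show ?thesis by (rule adjoint_cprod[OF A A hA x y])
qed

lemma eigen_orth:
  assumes h: "hermitian_mat n M" and x: "x \<in> carrier_vec n" and y: "y \<in> carrier_vec n"
    and ex: "M *\<^sub>v x = complex_of_real a \<cdot>\<^sub>v x" and ey: "M *\<^sub>v y = complex_of_real b \<cdot>\<^sub>v y"
    and ab: "a \<noteq> b"
  shows "x \<bullet>c y = 0"
proof -
  have "complex_of_real a * (x \<bullet>c y) = (M *\<^sub>v x) \<bullet>c y"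
    unfolding ex by (rule cprod_smult_left[OF x y, symmetric])
  also have "\<dots> = x \<bullet>c (M *\<^sub>v y)" by (rule herm_adj[OF h x y])
  also have "\<dots> = (1 \<cdot>\<^sub>v x) \<bullet>c (complex_of_real b \<cdot>\<^sub>v y)" unfolding ey by simp
  also have "\<dots> = complex_of_real b * (x \<bullet>c y)" unfolding cprod_smult[OF x y] by simp
  finally have "(complex_of_real a - complex_of_real b) * (x \<bullet>c y) = 0"
    by (simp add: algebra_simps)
  thus ?thesis using ab by simp
qed

lemma filter_upt_card:
  "length (filter P [a..<b]) = card {l\<in>{a..<b}. P l}"
proof -
  have "length (filter P [a..<b]) = card (set (filter P [a..<b]))"
    by (rule distinct_card[symmetric], simp)
  also have "set (filter P [a..<b]) = {l\<in>{a..<b}. P l}" by auto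
  finally show ?thesis .
qed

theorem proposition1:
  fixes n k :: nat and A B :: "complex mat"
  assumes "2 \<le> k" and "k < n"
    and "hermitian_mat n A" and "hermitian_mat n B"
    and "\<forall>s\<in>{2..k}. eig A s + eig B n = eig (A + B) s"
  shows "\<exists>x :: nat \<Rightarrow> complex vec.
           (\<forall>i\<in>{1..k-1}. x i \<in> carrier_vec n \<and> x i \<noteq> 0\<^sub>v n) \<and>
           (\<forall>i\<in>{1..k-1}. \<forall>j\<in>{1..k-1}. i \<noteq> j \<longrightarrow> x i \<bullet>c x j = 0) \<and>
           (\<forall>s\<in>{2..k}.
              A *\<^sub>v x (s - 1) = complex_of_real (eig A s) \<cdot>\<^sub>v x (s - 1) \<and>
              B *\<^sub>v x (s - 1) = complex_of_real (eig B n) \<cdot>\<^sub>v x (s - 1) \<and>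
              (A + B) *\<^sub>v x (s - 1) = complex_of_real (eig (A + B) s) \<cdot>\<^sub>v x (s - 1))"
proof -
  note k = assms(1,2)
  note hA = assms(3) and hB = assms(4)
  note eqs = assms(5)
  define C where "C = A + B"
  have hC: "hermitian_mat n C" unfolding C_def by (rule herm_add[OF hA hB])
  have A: "A \<in> carrier_mat n n" using hA unfolding hermitian_mat_def by blast
  have B: "B \<in> carrier_mat n n" using hB unfolding hermitian_mat_def by blast
  obtain PA QA dA where sA: "sdata n A PA QA dA" and mA: "image_mset Re (proots (char_poly A)) = mset (map dA [0..<n])"
    using spectral_data[OF hA] by blast
  obtain PB QB dB where sB: "sdata n B PB QB dB" and mB: "image_mset Re (proots (char_poly B)) = mset (map dB [0..<n])"
    using spectral_data[OF hB] by blast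
  obtain PC QC dC where sC: "sdata n C PC QC dC" and mC: "image_mset Re (proots (char_poly C)) = mset (map dC [0..<n])"
    using spectral_data[OF hC] by blast
  note fA = eig_facts[OF mA] and fB = eig_facts[OF mB] and fC = eig_facts[OF mC]
  define evA where "evA = eigvals_desc A"
  define evB where "evB = eigvals_desc B"
  define evC where "evC = eigvals_desc C"
  have PA: "PA \<in> carrier_mat n n" and QA: "QA \<in> carrier_mat n n" and QAPA: "QA * PA = 1\<^sub>m n"
    using sA unfolding sdata_def by blast+
  have adjA: "\<And>i j. i < n \<Longrightarrow> j < n \<Longrightarrow> QA $$ (j,i) = cnj (PA $$ (i,j))"
    using sA unfolding sdata_def by blast
  have QC: "QC \<in> carrier_mat n n" using sC unfolding sdata_def by blast
  have bmin: "\<And>i. i < n \<Longrightarrow> eig B n \<le> dB i"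
  proof -
    fix i assume i: "i < n"
    have "dB i \<in> set evB" unfolding evB_def using mset_eq_setD[OF fB(2)] i by auto
    then obtain j where j: "j < n" "evB ! j = dB i" using fB(1) unfolding evB_def by (auto simp: in_set_conv_nth)
    have "evB ! (n - 1) \<le> evB ! j" using sorted_rev_nth_mono[OF fB(3)[folded evB_def], of j "n - 1"] j fB(1)
      unfolding evB_def by auto
    thus "eig B n \<le> dB i" using fB(4)[of n] j unfolding evB_def by simp
  qed
  define good where "good = (\<lambda>m (x :: nat \<Rightarrow> complex vec).
     (\<forall>i\<in>{1..m}. x i \<in> carrier_vec n \<and> x i \<noteq> 0\<^sub>v n \<and>
        A *\<^sub>v x i = complex_of_real (eig A (i+1)) \<cdot>\<^sub>v x i \<and>
        B *\<^sub>v x i = complex_of_real (eig B n) \<cdot>\<^sub>v x i \<and>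
        C *\<^sub>v x i = complex_of_real (eig C (i+1)) \<cdot>\<^sub>v x i) \<and>
     (\<forall>i\<in>{1..m}. \<forall>j\<in>{1..m}. i \<noteq> j \<longrightarrow> x i \<bullet>c x j = 0))"
  have main: "m \<le> k - 1 \<Longrightarrow> \<exists>x. good m x" for m
  proof (induction m)
    case 0
    show ?case unfolding good_def by auto
  next
    case (Suc m)
    then obtain x where gx: "good m x" by auto
    have xl: "\<And>l. l \<in> {1..m} \<Longrightarrow> x l \<in> carrier_vec n" using gx unfolding good_def by blast
    have xlC: "\<And>l. l \<in> {1..m} \<Longrightarrow> C *\<^sub>v x l = complex_of_real (eig C (l+1)) \<cdot>\<^sub>v x l"
      using gx unfolding good_def by blast
    define p where "p = Suc m"
    have p: "p < n" "1 \<le> p" "p + 1 \<in> {2..k}" using Suc.prems k unfolding p_def by auto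
    define a where "a = eig A (p + 1)"
    define c where "c = eig C (p + 1)"
    define b where "b = eig B n"
    have abc: "a + b = c" using eqs p(3) unfolding a_def b_def c_def C_def by blast
    have aev: "a = evA ! p" unfolding a_def evA_def fA(4) by simp
    have cev: "c = evC ! p" unfolding c_def evC_def fC(4) by simp
    define R1 where "R1 = map (\<lambda>i. unit_vec n i :: complex vec) (filter (\<lambda>i. dA i < a) [0..<n])"
    define R2 where "R2 = map (\<lambda>j. row (QC * PA) j) (filter (\<lambda>j. c < dC j) [0..<n])"
    define R3 where "R3 = map (\<lambda>l. conjugate (QA *\<^sub>v x l)) (filter (\<lambda>l. eig C (l+1) = c) [1..<p])"
    have len1: "length R1 = length (filter (\<lambda>x. x < evA ! p) evA)"
    proof -
      have "length R1 = length (filter (\<lambda>x. x < a) (map dA [0..<n]))"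
        unfolding R1_def by (simp add: filter_map o_def)
      also have "\<dots> = length (filter (\<lambda>x. x < a) evA)"
        by (rule length_filter_mset, unfold evA_def fA(2), simp)
      finally show ?thesis unfolding aev .
    qed
    have len2: "length R2 = length (filter (\<lambda>x. evC ! p < x) evC)"
    proof -
      have "length R2 = length (filter (\<lambda>x. c < x) (map dC [0..<n]))"
        unfolding R2_def by (simp add: filter_map o_def)
      also have "\<dots> = length (filter (\<lambda>x. c < x) evC)"
        by (rule length_filter_mset, unfold evC_def fC(2), simp)
      finally show ?thesis unfolding cev .
    qed
    have len3: "length R3 = card {l\<in>{1..<p}. evC ! l = evC ! p}"
    proof -
      have "length R3 = card {l\<in>{1..<p}. eig C (l+1) = c}" unfolding R3_def by (simp add: filter_upt_card)
      also have "{l\<in>{1..<p}. eig C (l+1) = c} = {l\<in>{1..<p}. evC ! l = evC ! p}"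
        unfolding cev evC_def fC(4) by simp
      finally show ?thesis .
    qed
    have "length (filter (\<lambda>x. evC ! p < x) evC) + card {l\<in>{1..<p}. evC ! l = evC ! p}
       + length (filter (\<lambda>x. x < evA ! p) evA) < n"
      by (rule count_bound[OF fC(1) fA(1) fC(3) fA(3) p(1), folded evA_def evC_def])
    hence lenR: "length (R1 @ R2 @ R3) < n" using len1 len2 len3 by simp
    have carR: "set (R1 @ R2 @ R3) \<subseteq> carrier_vec n"
    proof -
      have "set R1 \<subseteq> carrier_vec n" unfolding R1_def by auto
      moreover have "set R2 \<subseteq> carrier_vec n" unfolding R2_def using QC PA by auto
      moreover have "set R3 \<subseteq> carrier_vec n" unfolding R3_def using QA xl p_def by auto
      ultimately show ?thesis by auto
    qed
    obtain z where z: "z \<in> carrier_vec n" "z \<noteq> 0\<^sub>v n" and zR: "\<forall>r\<in>set (R1 @ R2 @ R3). r \<bullet> z = 0"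
      using kernel_exists[OF carR lenR] by blast
    define y where "y = PA *\<^sub>v z"
    have y: "y \<in> carrier_vec n" unfolding y_def using PA z by simp
    have QAy: "QA *\<^sub>v y = z" unfolding y_def using assoc_mult_mat_vec[OF QA PA z(1)] QAPA z by simp
    have y0: "y \<noteq> 0\<^sub>v n"
    proof
      assume "y = 0\<^sub>v n"
      hence "QA *\<^sub>v y = 0\<^sub>v n" using QA by (intro eq_vecI, auto)
      thus False using QAy z by simp
    qed
    have condA: "\<forall>i<n. (QA *\<^sub>v y) $ i \<noteq> 0 \<longrightarrow> a \<le> dA i"
    proof (intro allI impI)
      fix i assume i: "i < n" and nz: "(QA *\<^sub>v y) $ i \<noteq> 0"
      show "a \<le> dA i"
      proof (rule ccontr)
      assume "\<not> a \<le> dA i"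
      hence "unit_vec n i \<in> set R1" unfolding R1_def using i by auto
      hence "unit_vec n i \<bullet> z = 0" using zR by auto
      hence "z $ i = 0" using i z by simp
      thus False using nz QAy by simp
      qed
    qed
    have condC: "\<forall>j<n. (QC *\<^sub>v y) $ j \<noteq> 0 \<longrightarrow> dC j \<le> c"
    proof (intro allI impI)
      fix j assume j: "j < n" and nz: "(QC *\<^sub>v y) $ j \<noteq> 0"
      show "dC j \<le> c"
      proof (rule ccontr)
      assume "\<not> dC j \<le> c"
      hence "row (QC * PA) j \<in> set R2" unfolding R2_def using j by auto
      hence "row (QC * PA) j \<bullet> z = 0" using zR by auto
      moreover have "row (QC * PA) j \<bullet> z = (QC *\<^sub>v y) $ j"
      proof -
        have "row (QC * PA) j \<bullet> z = ((QC * PA) *\<^sub>v z) $ j" using QC PA j by simp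
        also have "\<dots> = (QC *\<^sub>v y) $ j" unfolding y_def using assoc_mult_mat_vec[OF QC PA z(1)] by simp
        finally show ?thesis .
      qed
      ultimately show False using nz by simp
      qed
    qed
    have condB: "\<forall>i<n. (QB *\<^sub>v y) $ i \<noteq> 0 \<longrightarrow> b \<le> dB i" using bmin unfolding b_def by blast
    note gA = rayleigh_ge[OF sA y condA]
    note gB = rayleigh_ge[OF sB y condB]
    note lC = rayleigh_le[OF sC y condC]
    have qadd: "Re ((C *\<^sub>v y) \<bullet>c y) = Re ((A *\<^sub>v y) \<bullet>c y) + Re ((B *\<^sub>v y) \<bullet>c y)"
    proof -
      have "C *\<^sub>v y = A *\<^sub>v y + B *\<^sub>v y" unfolding C_def by (rule add_mult_distrib_mat_vec[OF A B y])
      hence "(C *\<^sub>v y) \<bullet>c y = (A *\<^sub>v y) \<bullet>c y + (B *\<^sub>v y) \<bullet>c y"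
        using add_scalar_prod_distrib[of "A *\<^sub>v y" n "B *\<^sub>v y" "conjugate y"] A B y by simp
      thus ?thesis by simp
    qed
    have cN: "c * Re (y \<bullet>c y) = a * Re (y \<bullet>c y) + b * Re (y \<bullet>c y)"
      unfolding abc[symmetric] by (simp add: algebra_simps)
    have eA: "a * Re (y \<bullet>c y) = Re ((A *\<^sub>v y) \<bullet>c y)"
      using gA(1) gB(1) lC(1) qadd cN by linarith
    have eB: "b * Re (y \<bullet>c y) = Re ((B *\<^sub>v y) \<bullet>c y)"
      using gA(1) gB(1) lC(1) qadd cN by linarith
    have eC: "c * Re (y \<bullet>c y) = Re ((C *\<^sub>v y) \<bullet>c y)"
      using gA(1) gB(1) lC(1) qadd cN by linarith
    have yA: "A *\<^sub>v y = complex_of_real a \<cdot>\<^sub>v y" by (rule gA(2)[OF eA])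
    have yB: "B *\<^sub>v y = complex_of_real b \<cdot>\<^sub>v y" by (rule gB(2)[OF eB])
    have yC: "C *\<^sub>v y = complex_of_real c \<cdot>\<^sub>v y" by (rule lC(2)[OF eC])
    have orth: "\<And>l. l \<in> {1..m} \<Longrightarrow> y \<bullet>c x l = 0"
    proof -
      fix l assume l: "l \<in> {1..m}"
      show "y \<bullet>c x l = 0"
      proof (cases "eig C (l+1) = c")
        case True
        have l1: "l \<in> {1..<p}" using l unfolding p_def by auto
        have "l \<in> set (filter (\<lambda>l. eig C (l+1) = c) [1..<p])"
          using l1 True by (simp only: set_filter set_upt, blast)
        hence "conjugate (QA *\<^sub>v x l) \<in> set R3" unfolding R3_def by (rule map_image_mem)
        hence "conjugate (QA *\<^sub>v x l) \<bullet> z = 0" using zR by auto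
        moreover have "y \<bullet>c x l = conjugate (QA *\<^sub>v x l) \<bullet> z"
        proof -
          have "y \<bullet>c x l = z \<bullet>c (QA *\<^sub>v x l)" unfolding y_def by (rule adjoint_cprod[OF PA QA adjA z(1) xl[OF l]])
          also have "\<dots> = conjugate (QA *\<^sub>v x l) \<bullet> z"
            by (rule comm_scalar_prod[of _ n], insert z QA xl[OF l], auto)
          finally show ?thesis .
        qed
        ultimately show ?thesis by simp
      next
        case False
        show ?thesis by (rule eigen_orth[OF hC y xl[OF l] yC xlC[OF l]], insert False, auto)
      qed
    qed
    define x' where "x' = x (Suc m := y)"
    have part1: "\<forall>i\<in>{1..Suc m}. x' i \<in> carrier_vec n \<and> x' i \<noteq> 0\<^sub>v n \<and>
        A *\<^sub>v x' i = complex_of_real (eig A (i+1)) \<cdot>\<^sub>v x' i \<and>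
        B *\<^sub>v x' i = complex_of_real (eig B n) \<cdot>\<^sub>v x' i \<and>
        C *\<^sub>v x' i = complex_of_real (eig C (i+1)) \<cdot>\<^sub>v x' i"
    proof
      fix i assume i: "i \<in> {1..Suc m}"
      show "x' i \<in> carrier_vec n \<and> x' i \<noteq> 0\<^sub>v n \<and>
        A *\<^sub>v x' i = complex_of_real (eig A (i+1)) \<cdot>\<^sub>v x' i \<and>
        B *\<^sub>v x' i = complex_of_real (eig B n) \<cdot>\<^sub>v x' i \<and>
        C *\<^sub>v x' i = complex_of_real (eig C (i+1)) \<cdot>\<^sub>v x' i"
      proof (cases "i = Suc m")
        case True
        thus ?thesis unfolding x'_def using y y0 yA yB yC
          unfolding a_def b_def c_def p_def by simp
      next
        case False
        with i have "i \<in> {1..m}" by auto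
        thus ?thesis unfolding x'_def using gx False unfolding good_def by auto
      qed
    qed
    have part2: "\<forall>i\<in>{1..Suc m}. \<forall>j\<in>{1..Suc m}. i \<noteq> j \<longrightarrow> x' i \<bullet>c x' j = 0"
    proof (intro ballI impI)
      fix i j assume i: "i \<in> {1..Suc m}" and j: "j \<in> {1..Suc m}" and ij: "i \<noteq> j"
      show "x' i \<bullet>c x' j = 0"
      proof (cases "i = Suc m")
        case True
        with ij j have j': "j \<in> {1..m}" by auto
        thus ?thesis unfolding x'_def using True ij orth[OF j'] by simp
      next
        case False
        with i have i': "i \<in> {1..m}" by auto
        show ?thesis
        proof (cases "j = Suc m")
          case True
          have "x l \<bullet>c y = cnj (y \<bullet>c x l)" if "l \<in> {1..m}" for l
            using cprod_cnj[OF y xl[OF that]] by simp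
          thus ?thesis unfolding x'_def using True False orth[OF i'] i' by simp
        next
          case False
          with j have j': "j \<in> {1..m}" by auto
          thus ?thesis unfolding x'_def using gx i' ij False \<open>i \<noteq> Suc m\<close> unfolding good_def by auto
        qed
      qed
    qed
    have "good (Suc m) x'" unfolding good_def using part1 part2 by blast
    thus ?case by blast
  qed
  obtain x where gx: "good (k - 1) x" using main[of "k - 1"] by blast
  show ?thesis
  proof (intro exI[of _ x] conjI ballI impI)
    fix i assume "i \<in> {1..k-1}"
    thus "x i \<in> carrier_vec n" "x i \<noteq> 0\<^sub>v n" using gx unfolding good_def by auto
  next
    fix i j assume "i \<in> {1..k-1}" "j \<in> {1..k-1}" "i \<noteq> j"
    thus "x i \<bullet>c x j = 0" using gx unfolding good_def by auto
  next
    fix s assume s: "s \<in> {2..k}"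
    hence i: "s - 1 \<in> {1..k-1}" and si: "s - 1 + 1 = s" by auto
    have "A *\<^sub>v x (s - 1) = complex_of_real (eig A (s - 1 + 1)) \<cdot>\<^sub>v x (s - 1) \<and>
        B *\<^sub>v x (s - 1) = complex_of_real (eig B n) \<cdot>\<^sub>v x (s - 1) \<and>
        C *\<^sub>v x (s - 1) = complex_of_real (eig C (s - 1 + 1)) \<cdot>\<^sub>v x (s - 1)"
      using gx i unfolding good_def by blast
    thus "A *\<^sub>v x (s - 1) = complex_of_real (eig A s) \<cdot>\<^sub>v x (s - 1)"
      "B *\<^sub>v x (s - 1) = complex_of_real (eig B n) \<cdot>\<^sub>v x (s - 1)"
      "(A + B) *\<^sub>v x (s - 1) = complex_of_real (eig (A + B) s) \<cdot>\<^sub>v x (s - 1)"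
      unfolding si C_def by auto
  qed
qed

end
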